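(* Fix integers $r, s, t \ge 1$. Let $(\Lambda V, d)$ be a minimal Sullivan algebra over $\mathbb{Q}$ with $V = \{V^p\}_{p \ge r}$ (i.e. $V^p = 0$ for $p < r$), and such that $d$ vanishes on all elements of degree $\le s$. Suppose that all $t$-complementary products in $H^+(\Lambda V)$ vanish, i.e. $\alpha \wedge \beta = 0$ in $H^t(\Lambda V)$ for all $\alpha \in H^i(\Lambda V)$, $\beta \in H^{t-i}(\Lambda V)$, $1 \le i \le t-1$. If $t \le r + s$, then the homomorphism $\zeta \colon H^+(\Lambda V) \to V$ is injective in degree $t$.
   Context: A graded vector space is $V = \{V^p\}_{p\ge1}$ of rational vector spaces. $\Lambda V$ is the free graded commutative algebra on $V$; $\Lambda^q V$ is the span of products of word length $q$ of elements of $V$, $\Lambda^{\ge q}V=\bigoplus_{q'\ge q}\Lambda^{q'}V$, $\Lambda^+V = \Lambda^{\ge1}V$. A Sullivan algebra is a commutative cochain algebra $(\Lambda V,d)$ such that there is an increasing filtration $V(0)\subset V(1)\subset\cdots$ with $V=\bigcup V(k)$, $d=0$ on $V(0)$ and $d(V(k))\subset\Lambda V(k-1)$; it is minimal if moreover $\mathrm{im}\, d \subset \Lambda^{\ge2}V$. For a minimal Sullivan algebra, $\zeta \colon H^+(\Lambda V)\to V$ is defined by $\zeta([z]) = \rho(z)$, where $\rho\colon\Lambda^+V\to\Lambda^1V=V$ is the projection onto word length one (well defined since $\mathrm{im}\,d\subset\Lambda^{\ge2}V$). *)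

theory Defs
  imports Complex_Main "HOL-Library.Multiset"
begin

text \<open>
  Concrete model of the free graded commutative algebra \<Lambda>V over the rationals.
  The graded vector space V is given by a homogeneous basis indexed by the type 'i,
  with degree function deg; the basis is totally ordered (class linorder).
  A basis monomial of \<Lambda>V is a finite multiset of basis elements in which every
  odd-degree element occurs at most once; it stands for the product of its
  elements written in increasing order. An element of \<Lambda>V is a finitely
  supported rational function on such monomials.
\<close>

type_synonym 'i lam = "'i multiset \<Rightarrow> rat"

definition valid_mon :: "('i \<Rightarrow> nat) \<Rightarrow> 'i multiset \<Rightarrow> bool" where
  "valid_mon deg m \<longleftrightarrow> (\<forall>x. odd (deg x) \<longrightarrow> count m x \<le> 1)"

definition mdeg :: "('i \<Rightarrow> nat) \<Rightarrow> 'i multiset \<Rightarrow> nat" where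
  "mdeg deg m = sum_mset (image_mset deg m)"

definition LV :: "('i \<Rightarrow> nat) \<Rightarrow> 'i lam set" where
  "LV deg = {f. finite {m. f m \<noteq> 0} \<and> (\<forall>m. f m \<noteq> 0 \<longrightarrow> valid_mon deg m)}"

definition lzero :: "'i lam" where
  "lzero = (\<lambda>m. 0)"

definition lone :: "'i lam" where
  "lone = (\<lambda>m. if m = {#} then 1 else 0)"

definition ladd :: "'i lam \<Rightarrow> 'i lam \<Rightarrow> 'i lam" where
  "ladd f g = (\<lambda>m. f m + g m)"

definition lsmult :: "rat \<Rightarrow> 'i lam \<Rightarrow> 'i lam" where
  "lsmult c f = (\<lambda>m. c * f m)"

text \<open>Koszul sign for the product of the ordered monomials a and b.\<close>
definition msign :: "('i::linorder \<Rightarrow> nat) \<Rightarrow> 'i multiset \<Rightarrow> 'i multiset \<Rightarrow> rat" where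
  "msign deg a b = (-1) ^ card {(x, y). x \<in># a \<and> y \<in># b \<and> odd (deg x) \<and> odd (deg y) \<and> y < x}"

definition lmult :: "('i::linorder \<Rightarrow> nat) \<Rightarrow> 'i lam \<Rightarrow> 'i lam \<Rightarrow> 'i lam" where
  "lmult deg f g = (\<lambda>m. if valid_mon deg m
      then (\<Sum>a\<in>{a. a \<subseteq># m}. msign deg a (m - a) * f a * g (m - a)) else 0)"

definition homog :: "('i \<Rightarrow> nat) \<Rightarrow> nat \<Rightarrow> 'i lam \<Rightarrow> bool" where
  "homog deg n f \<longleftrightarrow> (\<forall>m. f m \<noteq> 0 \<longrightarrow> mdeg deg m = n)"

definition hcomp :: "('i \<Rightarrow> nat) \<Rightarrow> nat \<Rightarrow> 'i lam \<Rightarrow> 'i lam" where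
  "hcomp deg n f = (\<lambda>m. if mdeg deg m = n then f m else 0)"

definition Vsp :: "('i \<Rightarrow> nat) \<Rightarrow> 'i lam set" where
  "Vsp deg = {f \<in> LV deg. \<forall>m. f m \<noteq> 0 \<longrightarrow> size m = 1}"

definition rho :: "'i lam \<Rightarrow> 'i lam" where
  "rho z = (\<lambda>m. if size m = 1 then z m else 0)"

inductive_set gen_alg :: "('i::linorder \<Rightarrow> nat) \<Rightarrow> 'i lam set \<Rightarrow> 'i lam set"
  for deg :: "'i \<Rightarrow> nat" and W :: "'i lam set" where
  one: "lone \<in> gen_alg deg W"
| gen: "f \<in> W \<Longrightarrow> f \<in> gen_alg deg W"
| add: "f \<in> gen_alg deg W \<Longrightarrow> g \<in> gen_alg deg W \<Longrightarrow> ladd f g \<in> gen_alg deg W"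
| smult: "f \<in> gen_alg deg W \<Longrightarrow> lsmult c f \<in> gen_alg deg W"
| mult: "f \<in> gen_alg deg W \<Longrightarrow> g \<in> gen_alg deg W \<Longrightarrow> lmult deg f g \<in> gen_alg deg W"

definition graded_subspace :: "('i \<Rightarrow> nat) \<Rightarrow> 'i lam set \<Rightarrow> bool" where
  "graded_subspace deg W \<longleftrightarrow> W \<subseteq> Vsp deg \<and> lzero \<in> W
     \<and> (\<forall>f\<in>W. \<forall>g\<in>W. ladd f g \<in> W) \<and> (\<forall>c. \<forall>f\<in>W. lsmult c f \<in> W)
     \<and> (\<forall>n. \<forall>f\<in>W. hcomp deg n f \<in> W)"

definition cochain_alg :: "('i::linorder \<Rightarrow> nat) \<Rightarrow> ('i lam \<Rightarrow> 'i lam) \<Rightarrow> bool" where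
  "cochain_alg deg d \<longleftrightarrow>
     (\<forall>x. 1 \<le> deg x)
   \<and> (\<forall>f\<in>LV deg. d f \<in> LV deg)
   \<and> (\<forall>f\<in>LV deg. \<forall>g\<in>LV deg. d (ladd f g) = ladd (d f) (d g))
   \<and> (\<forall>c. \<forall>f\<in>LV deg. d (lsmult c f) = lsmult c (d f))
   \<and> (\<forall>n. \<forall>f\<in>LV deg. homog deg n f \<longrightarrow> homog deg (n + 1) (d f))
   \<and> (\<forall>n. \<forall>f\<in>LV deg. \<forall>g\<in>LV deg. homog deg n f \<longrightarrow>
        d (lmult deg f g) = ladd (lmult deg (d f) g) (lsmult ((-1) ^ n) (lmult deg f (d g))))
   \<and> (\<forall>f\<in>LV deg. d (d f) = lzero)"

definition sullivan_alg :: "('i::linorder \<Rightarrow> nat) \<Rightarrow> ('i lam \<Rightarrow> 'i lam) \<Rightarrow> bool" where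
  "sullivan_alg deg d \<longleftrightarrow> cochain_alg deg d \<and>
     (\<exists>Vf :: nat \<Rightarrow> 'i lam set.
        (\<forall>k. graded_subspace deg (Vf k)) \<and> (\<forall>k. Vf k \<subseteq> Vf (Suc k))
      \<and> Vsp deg = (\<Union>k. Vf k)
      \<and> (\<forall>f\<in>Vf 0. d f = lzero)
      \<and> (\<forall>k. \<forall>f\<in>Vf (Suc k). d f \<in> gen_alg deg (Vf k)))"

definition minimal_sullivan_alg :: "('i::linorder \<Rightarrow> nat) \<Rightarrow> ('i lam \<Rightarrow> 'i lam) \<Rightarrow> bool" where
  "minimal_sullivan_alg deg d \<longleftrightarrow> sullivan_alg deg d \<and>
     (\<forall>f\<in>LV deg. \<forall>m. size m \<le> 1 \<longrightarrow> d f m = 0)"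

definition cocycle :: "('i \<Rightarrow> nat) \<Rightarrow> ('i lam \<Rightarrow> 'i lam) \<Rightarrow> nat \<Rightarrow> 'i lam \<Rightarrow> bool" where
  "cocycle deg d n z \<longleftrightarrow> z \<in> LV deg \<and> homog deg n z \<and> d z = lzero"

definition coboundary :: "('i \<Rightarrow> nat) \<Rightarrow> ('i lam \<Rightarrow> 'i lam) \<Rightarrow> 'i lam \<Rightarrow> bool" where
  "coboundary deg d z \<longleftrightarrow> (\<exists>b\<in>LV deg. z = d b)"

end

theory Submission
  imports Defs
begin

definition delta :: "'i multiset \<Rightarrow> 'i lam" where
  "delta m = (\<lambda>m'. if m' = m then 1 else 0)"

lemma LV_lzero: "lzero \<in> LV deg"
  by (simp add: LV_def lzero_def)

lemma LV_ladd: "f \<in> LV deg \<Longrightarrow> g \<in> LV deg \<Longrightarrow> ladd f g \<in> LV deg"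
  unfolding LV_def ladd_def
  apply auto
  apply (rule finite_subset[of _ "{m. f m \<noteq> 0} \<union> {m. g m \<noteq> 0}"])
  apply auto
  by (metis add.right_neutral)

lemma LV_lsmult: "f \<in> LV deg \<Longrightarrow> lsmult c f \<in> LV deg"
  unfolding LV_def lsmult_def
  by auto

lemma LV_delta: "valid_mon deg m \<Longrightarrow> delta m \<in> LV deg"
  unfolding LV_def delta_def by auto

lemma finite_submsets: "finite {a. a \<subseteq># (m::'a multiset)}"
proof (induction m)
  case empty
  then show ?case by simp
next
  case (add x M)
  have "{a. a \<subseteq># add_mset x M} \<subseteq> {a. a \<subseteq># M} \<union> add_mset x ` {a. a \<subseteq># M}"
  proof
    fix a assume "a \<in> {a. a \<subseteq># add_mset x M}"
    then have a: "a \<subseteq># add_mset x M" by simp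
    show "a \<in> {a. a \<subseteq># M} \<union> add_mset x ` {a. a \<subseteq># M}"
    proof (cases "x \<in># a")
      case True
      then have "a = add_mset x (a - {#x#})" by simp
      moreover have "a - {#x#} \<subseteq># M" using a True
        by (auto simp: subseteq_mset_def split: if_splits)
      ultimately show ?thesis by blast
    next
      case False
      have "a \<subseteq># M" proof (rule mset_subset_eqI)
        fix y show "count a y \<le> count M y"
        proof (cases "y = x")
          case True then show ?thesis using False by (simp add: not_in_iff)
        next
          case F: False then show ?thesis using mset_subset_eq_count[OF a, of y] by simp
        qed
      qed
      then show ?thesis by blast
    qed
  qed
  then show ?case using add.IH by (meson finite_Un finite_imageI finite_subset)
qed

lemma valid_sub: "valid_mon deg m \<Longrightarrow> a \<subseteq># m \<Longrightarrow> valid_mon deg a"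
  unfolding valid_mon_def by (meson le_trans mset_subset_eq_count)

lemma cob_add:
  assumes "cochain_alg deg d" "coboundary deg d f" "coboundary deg d g"
  shows "coboundary deg d (ladd f g)"
proof -
  obtain b c where "b \<in> LV deg" "c \<in> LV deg" "f = d b" "g = d c"
    using assms unfolding coboundary_def by blast
  then show ?thesis using assms(1) LV_ladd unfolding coboundary_def cochain_alg_def
    by metis
qed

lemma cob_smult:
  assumes "cochain_alg deg d" "coboundary deg d f"
  shows "coboundary deg d (lsmult c f)"
proof -
  obtain b where "b \<in> LV deg" "f = d b"
    using assms unfolding coboundary_def by blast
  then show ?thesis using assms(1) LV_lsmult unfolding coboundary_def cochain_alg_def
    by metis
qed

lemma cob_zero:
  assumes "cochain_alg deg d"
  shows "coboundary deg d lzero"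
proof -
  have "d (lsmult 0 lzero) = lsmult 0 (d lzero)"
    using assms LV_lzero unfolding cochain_alg_def by blast
  also have "\<dots> = lzero" by (simp add: lsmult_def lzero_def)
  finally show ?thesis unfolding coboundary_def
    using LV_lsmult[OF LV_lzero] by metis
qed

lemma cob_sum:
  assumes "cochain_alg deg d" "finite S"
  shows "\<forall>f. f \<in> LV deg \<and> {m. f m \<noteq> 0} \<subseteq> S \<and> (\<forall>m. f m \<noteq> 0 \<longrightarrow> coboundary deg d (delta m))
     \<longrightarrow> coboundary deg d f"
  using assms(2)
proof (induction S rule: finite_induct)
  case empty
  then show ?case using cob_zero[OF assms(1)]
    by (auto simp: lzero_def fun_eq_iff)
next
  case (insert m S)
  show ?case
  proof (intro allI impI)
    fix f assume H: "f \<in> LV deg \<and> {m. f m \<noteq> 0} \<subseteq> insert m S \<and> (\<forall>m. f m \<noteq> 0 \<longrightarrow> coboundary deg d (delta m))"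
    define g where "g = f(m := 0)"
    have "g \<in> LV deg" using H unfolding LV_def g_def
      by (auto intro: finite_subset[of _ "{m. f m \<noteq> 0}"])
    moreover have "{m. g m \<noteq> 0} \<subseteq> S" using H unfolding g_def by auto
    moreover have "\<forall>m. g m \<noteq> 0 \<longrightarrow> coboundary deg d (delta m)" using H unfolding g_def by auto
    ultimately have cg: "coboundary deg d g" using insert.IH by blast
    have cm: "coboundary deg d (lsmult (f m) (delta m))"
    proof (cases "f m = 0")
      case True
      then have "lsmult (f m) (delta m) = lzero" by (simp add: lsmult_def lzero_def)
      then show ?thesis using cob_zero[OF assms(1)] by simp
    next
      case False
      then show ?thesis using H cob_smult[OF assms(1)] by blast
    qed
    have "f = ladd (lsmult (f m) (delta m)) g"
      by (auto simp: fun_eq_iff ladd_def lsmult_def delta_def g_def)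
    then show "coboundary deg d f" using cob_add[OF assms(1) cm cg] by simp
  qed
qed

lemma lmult_delta:
  assumes "valid_mon deg (add_mset x R)"
  shows "lmult deg (delta {#x#}) (delta R) = lsmult (msign deg {#x#} R) (delta (add_mset x R))"
proof (rule ext)
  fix m'
  show "lmult deg (delta {#x#}) (delta R) m' = lsmult (msign deg {#x#} R) (delta (add_mset x R)) m'"
  proof (cases "valid_mon deg m'")
    case False
    then show ?thesis using assms by (auto simp: lmult_def lsmult_def delta_def)
  next
    case True
    have "(\<Sum>a\<in>{a. a \<subseteq># m'}. msign deg a (m' - a) * delta {#x#} a * delta R (m' - a))
        = (\<Sum>a\<in>{a. a \<subseteq># m'}. if a = {#x#} then msign deg {#x#} (m' - {#x#}) * delta R (m' - {#x#}) else 0)"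
      by (rule sum.cong) (auto simp: delta_def)
    also have "\<dots> = (if {#x#} \<subseteq># m' then msign deg {#x#} (m' - {#x#}) * delta R (m' - {#x#}) else 0)"
      by (simp add: sum.delta' finite_submsets)
    also have "\<dots> = lsmult (msign deg {#x#} R) (delta (add_mset x R)) m'"
      by (auto simp: lsmult_def delta_def)
    finally show ?thesis using True by (simp add: lmult_def)
  qed
qed

theorem mainTheorem7:
  fixes deg :: "'i::linorder \<Rightarrow> nat" and d :: "'i lam \<Rightarrow> 'i lam" and r s t :: nat
  assumes "1 \<le> r" and "1 \<le> s" and "1 \<le> t"
    and "minimal_sullivan_alg deg d"
    and "\<forall>x. r \<le> deg x"
    and "\<forall>n\<le>s. \<forall>f\<in>LV deg. homog deg n f \<longrightarrow> d f = lzero"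
    and "\<forall>i. 1 \<le> i \<and> i \<le> t - 1 \<longrightarrow>
           (\<forall>z w. cocycle deg d i z \<and> cocycle deg d (t - i) w \<longrightarrow> coboundary deg d (lmult deg z w))"
    and "t \<le> r + s"
  shows "\<forall>z. cocycle deg d t z \<and> rho z = lzero \<longrightarrow> coboundary deg d z"
proof (intro allI impI)
  fix z assume Z: "cocycle deg d t z \<and> rho z = lzero"
  have ca: "cochain_alg deg d" using assms(4)
    unfolding minimal_sullivan_alg_def sullivan_alg_def by blast
  have zLV: "z \<in> LV deg" using Z unfolding cocycle_def by blast
  have good: "coboundary deg d (delta m)" if nz: "z m \<noteq> 0" for m
  proof -
    have vm: "valid_mon deg m" using zLV nz unfolding LV_def by blast
    have md: "mdeg deg m = t" using Z nz unfolding cocycle_def homog_def by blast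
    have "size m \<noteq> 1" using Z nz unfolding rho_def lzero_def by (metis)
    moreover have "m \<noteq> {#}" using md assms(3) by (auto simp: mdeg_def)
    ultimately obtain x R where mR: "m = add_mset x R" and Rne: "R \<noteq> {#}"
      by (metis multiset_cases size_single)
    obtain y R' where R': "R = add_mset y R'" using Rne by (metis multiset_cases)
    have mdR: "mdeg deg R \<ge> r" using assms(5) R' by (simp add: mdeg_def) (metis add.commute trans_le_add2)
    have mdm: "mdeg deg m = deg x + mdeg deg R" using mR by (simp add: mdeg_def)
    have dx1: "deg x \<ge> 1" using assms(1,5) by (meson le_trans)
    have dxs: "deg x \<le> s" using mdm md mdR assms(8) by linarith
    have dxt: "deg x \<le> t - 1" using mdm md mdR assms(1) by linarith
    have dRs: "mdeg deg R \<le> s" using mdm md assms(5)[rule_format, of x] assms(8) by linarith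
    have vx: "valid_mon deg {#x#}" using vm mR valid_sub by fastforce
    have vR: "valid_mon deg R" using vm mR valid_sub by fastforce
    have hx: "homog deg (deg x) (delta {#x#})" by (auto simp: homog_def delta_def mdeg_def)
    have hR: "homog deg (mdeg deg R) (delta R)" by (auto simp: homog_def delta_def)
    have cx: "cocycle deg d (deg x) (delta {#x#})"
      using assms(6) dxs hx LV_delta[OF vx] unfolding cocycle_def by blast
    have "t - deg x = mdeg deg R" using mdm md by simp
    then have cR: "cocycle deg d (t - deg x) (delta R)"
      using assms(6) dRs hR LV_delta[OF vR] unfolding cocycle_def by metis
    have cp: "coboundary deg d (lmult deg (delta {#x#}) (delta R))"
      using assms(7) dx1 dxt cx cR by blast
    have sgn: "msign deg {#x#} R \<noteq> 0" by (simp add: msign_def)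
    have "delta m = lsmult (1 / msign deg {#x#} R) (lmult deg (delta {#x#}) (delta R))"
      using lmult_delta[of deg x R] vm mR sgn by (auto simp: lsmult_def fun_eq_iff)
    then show ?thesis using cob_smult[OF ca cp] by simp
  qed
  have "finite {m. z m \<noteq> 0}" using zLV unfolding LV_def by blast
  from cob_sum[OF ca this] show "coboundary deg d z" using zLV good by blast
qed

end
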